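(* Let $G$ and $H$ be connected graphs, each with at least $2$ vertices. Then $$\gamma(G\times H)=\frac{1}{\frac{1}{\gamma(G)}+\frac{1}{\gamma(H)}}.$$
   Context: For a finite simple undirected graph $G$ with $n$ vertices, let $\mathcal{F}=\{x\in\mathbb{R}^{V(G)} : \sum_{v} x_v = 0,\ \|x\|_\infty = 1\}$, for $x\in\mathcal{F}$ let $\gamma_x(G)=\max_{uv\in E(G)}|x_u-x_v|$, and $\gamma(G)=\min_{x\in\mathcal{F}}\gamma_x(G)$. The Cartesian product $G\times H$ has vertex set $V(G)\times V(H)$, with $(u_1,v_1)\sim(u_2,v_2)$ iff either $u_1\sim u_2$ in $G$ and $v_1=v_2$, or $u_1=u_2$ and $v_1\sim v_2$ in $H$. *)

theory Defs
  imports Complex_Main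
begin

definition simple_graph :: "'a set \<Rightarrow> ('a \<Rightarrow> 'a \<Rightarrow> bool) \<Rightarrow> bool" where
  "simple_graph V E \<longleftrightarrow> finite V \<and> (\<forall>u v. E u v \<longrightarrow> u \<in> V \<and> v \<in> V)
     \<and> (\<forall>u v. E u v \<longrightarrow> E v u) \<and> (\<forall>v. \<not> E v v)"

definition connected_graph :: "'a set \<Rightarrow> ('a \<Rightarrow> 'a \<Rightarrow> bool) \<Rightarrow> bool" where
  "connected_graph V E \<longleftrightarrow> V \<noteq> {} \<and> (\<forall>u\<in>V. \<forall>v\<in>V. E\<^sup>*\<^sup>* u v)"

definition sup_norm :: "'a set \<Rightarrow> ('a \<Rightarrow> real) \<Rightarrow> real" where
  "sup_norm V x = Max ((\<lambda>v. \<bar>x v\<bar>) ` V)"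

text \<open>The feasible set F (only values on V matter).\<close>
definition feasible :: "'a set \<Rightarrow> ('a \<Rightarrow> real) set" where
  "feasible V = {x. (\<Sum>v\<in>V. x v) = 0 \<and> sup_norm V x = 1}"

definition gamma_x :: "'a set \<Rightarrow> ('a \<Rightarrow> 'a \<Rightarrow> bool) \<Rightarrow> ('a \<Rightarrow> real) \<Rightarrow> real" where
  "gamma_x V E x = Max {\<bar>x u - x v\<bar> | u v. u \<in> V \<and> v \<in> V \<and> E u v}"

definition gamma :: "'a set \<Rightarrow> ('a \<Rightarrow> 'a \<Rightarrow> bool) \<Rightarrow> real" where
  "gamma V E = Inf (gamma_x V E ` feasible V)"

fun cart_edge :: "('a \<Rightarrow> 'a \<Rightarrow> bool) \<Rightarrow> ('b \<Rightarrow> 'b \<Rightarrow> bool) \<Rightarrow> 'a \<times> 'b \<Rightarrow> 'a \<times> 'b \<Rightarrow> bool" where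
  "cart_edge EG EH (u1, v1) (u2, v2) \<longleftrightarrow> (EG u1 u2 \<and> v1 = v2) \<or> (u1 = u2 \<and> EH v1 v2)"

end

theory Submission
  imports Defs
begin

lemma gx_set_finite: "finite V \<Longrightarrow> finite {\<bar>x u - x v\<bar> | u v. u \<in> V \<and> v \<in> V \<and> E u v}"
  by (rule finite_subset[of _ "(\<lambda>(u,v). \<bar>x u - x v\<bar>) ` (V \<times> V)"]) auto

lemma gx_ge: "finite V \<Longrightarrow> u \<in> V \<Longrightarrow> v \<in> V \<Longrightarrow> E u v \<Longrightarrow> \<bar>x u - x v\<bar> \<le> gamma_x V E x"
  unfolding gamma_x_def by (rule Max_ge) (use gx_set_finite in auto)

lemma gx_le: "finite V \<Longrightarrow> u \<in> V \<Longrightarrow> v \<in> V \<Longrightarrow> E u v \<Longrightarrow>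
   (\<forall>u v. u \<in> V \<longrightarrow> v \<in> V \<longrightarrow> E u v \<longrightarrow> \<bar>x u - x v\<bar> \<le> c) \<Longrightarrow> gamma_x V E x \<le> c"
  unfolding gamma_x_def by (subst Max_le_iff) (auto simp: gx_set_finite)

lemma sn_ge: "finite V \<Longrightarrow> v \<in> V \<Longrightarrow> \<bar>x v\<bar> \<le> sup_norm V x"
  unfolding sup_norm_def by (rule Max_ge) auto

lemma sn_attain: "finite V \<Longrightarrow> V \<noteq> {} \<Longrightarrow> \<exists>v\<in>V. \<bar>x v\<bar> = sup_norm V x"
proof -
  assume "finite V" "V \<noteq> {}"
  then have "Max ((\<lambda>v. \<bar>x v\<bar>) ` V) \<in> (\<lambda>v. \<bar>x v\<bar>) ` V" by (intro Max_in) auto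
  then show ?thesis unfolding sup_norm_def by auto
qed

lemma sn_le: "finite V \<Longrightarrow> V \<noteq> {} \<Longrightarrow> (\<forall>v\<in>V. \<bar>x v\<bar> \<le> c) \<Longrightarrow> sup_norm V x \<le> c"
  unfolding sup_norm_def by (subst Max_le_iff) auto

lemma path_bound: "(E ^^ n) u w \<Longrightarrow> (\<forall>a b. E a b \<longrightarrow> \<bar>x a - x b\<bar> \<le> d) \<Longrightarrow> \<bar>x u - x w\<bar> \<le> real n * d"
proof (induction n arbitrary: w)
  case 0
  then show ?case by simp
next
  case (Suc n)
  from Suc.prems(1) obtain y where y: "(E ^^ n) u y" "E y w" by (rule relpowp_Suc_E)
  have "\<bar>x u - x y\<bar> \<le> real n * d" using Suc.IH[OF y(1)] Suc.prems(2) by blast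
  moreover have "\<bar>x y - x w\<bar> \<le> d" using Suc.prems(2) y(2) by blast
  ultimately show ?case by (simp add: algebra_simps)
qed

lemma two_elems: "card V \<ge> 2 \<Longrightarrow> \<exists>u\<in>V. \<exists>w\<in>V. u \<noteq> w"
proof -
  assume a: "card V \<ge> 2"
  then have f: "finite V" using card.infinite by fastforce
  have "\<not> card V \<le> Suc 0" using a by simp
  then show ?thesis using card_le_Suc0_iff_eq[OF f] by blast
qed

lemma edge_exists:
  assumes "connected_graph V E" "card V \<ge> 2"
  shows "\<exists>u v. E u v"
proof -
  obtain u w where uw: "u \<in> V" "w \<in> V" "u \<noteq> w"
    using two_elems[OF assms(2)] by blast
  then have "E\<^sup>*\<^sup>* u w" using assms(1) unfolding connected_graph_def by blast
  then show ?thesis using uw(3) by (cases rule: converse_rtranclpE) auto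
qed

lemma feasible_nonempty:
  assumes "finite V" "card V \<ge> 2"
  shows "feasible V \<noteq> {}"
proof -
  obtain u w where uw: "u \<in> V" "w \<in> V" "u \<noteq> w"
    using two_elems[OF assms(2)] by blast
  define x :: "_ \<Rightarrow> real" where "x = (\<lambda>v. (if v = u then 1 else 0) - (if v = w then 1 else 0))"
  have "(\<Sum>v\<in>V. x v) = 0" unfolding x_def using uw assms(1) by (simp add: sum_subtractf sum.delta)
  moreover have "sup_norm V x = 1"
  proof (rule antisym)
    show "sup_norm V x \<le> 1" using assms(1) uw by (intro sn_le) (auto simp: x_def)
    show "1 \<le> sup_norm V x" using sn_ge[OF assms(1) uw(1), of x] uw by (simp add: x_def)
  qed
  ultimately show ?thesis unfolding feasible_def by blast
qed


lemma exists_far: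
  assumes "finite V" "x \<in> feasible V" and V: "V \<noteq> {}"
  shows "\<exists>u\<in>V. \<exists>w\<in>V. 1 \<le> \<bar>x u - x w\<bar>"
proof -
  obtain u where u: "u \<in> V" "\<bar>x u\<bar> = 1" using sn_attain[OF assms(1) V, of x] assms(2)
    unfolding feasible_def by auto
  have s: "(\<Sum>v\<in>V. x v) = 0" using assms(2) unfolding feasible_def by auto
  show ?thesis
  proof (rule ccontr)
    assume "\<not> ?thesis"
    then have a: "\<forall>w\<in>V. \<bar>x u - x w\<bar> < 1" using u by force
    show False
    proof (cases "x u = 1")
      case True
      then have "\<forall>w\<in>V. x w > 0" using a by force
      then have "(\<Sum>v\<in>V. x v) > 0" using V assms(1) by (intro sum_pos) auto
      then show False using s by simp
    next
      case False
      then have "x u = -1" using u by linarith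
      then have "\<forall>w\<in>V. - x w > 0" using a by force
      then have "(\<Sum>v\<in>V. - x v) > 0" using V assms(1) by (intro sum_pos) auto
      then show False using s by (simp add: sum_negf)
    qed
  qed
qed

lemma gamma_pos_bound:
  assumes "simple_graph V E" "connected_graph V E"
  shows "\<exists>c>0. \<forall>x\<in>feasible V. c \<le> gamma_x V E x"
proof -
  have fin: "finite V" and inV: "\<And>u v. E u v \<Longrightarrow> u \<in> V \<and> v \<in> V"
    using assms(1) unfolding simple_graph_def by auto
  have "\<forall>p\<in>V \<times> V. \<exists>n. (E ^^ n) (fst p) (snd p)"
    using assms(2) unfolding connected_graph_def by (auto intro: rtranclp_imp_relpowp)
  then obtain nf where nf: "\<And>p. p \<in> V \<times> V \<Longrightarrow> (E ^^ nf p) (fst p) (snd p)" by metis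
  define N where "N = (\<Sum>p\<in>V \<times> V. nf p)"
  have nN: "nf p \<le> N" if "p \<in> V \<times> V" for p
    unfolding N_def using that fin by (intro member_le_sum) auto
  show ?thesis
  proof (intro exI[of _ "1 / (real N + 1)"] conjI ballI)
    show "0 < 1 / (real N + 1)" by simp
    fix x assume x: "x \<in> feasible V"
    define d where "d = gamma_x V E x"
    have ed: "\<forall>a b. E a b \<longrightarrow> \<bar>x a - x b\<bar> \<le> d" unfolding d_def using inV fin gx_ge by metis
    obtain u w where uw: "u \<in> V" "w \<in> V" "1 \<le> \<bar>x u - x w\<bar>" using exists_far[OF fin x] assms(2) unfolding connected_graph_def by blast
    have "\<bar>x u - x w\<bar> \<le> real (nf (u,w)) * d" using path_bound[OF nf[of "(u,w)"] ed] uw by simp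
    then have 1: "1 \<le> real (nf (u,w)) * d" using uw by linarith
    have "d > 0" by (rule ccontr) (use 1 mult_nonneg_nonpos[of "real (nf (u,w))" d] in auto)
    have "real (nf (u,w)) * d \<le> (real N + 1) * d"
      using nN[of "(u,w)"] uw \<open>d > 0\<close> by (intro mult_right_mono) auto
    then have "1 \<le> (real N + 1) * d" using 1 by linarith
    then show "1 / (real N + 1) \<le> gamma_x V E x" unfolding d_def[symmetric]
      by (simp add: divide_le_eq mult.commute add_pos_nonneg)
  qed
qed

lemma gamma_ge:
  "feasible V \<noteq> {} \<Longrightarrow> (\<forall>x\<in>feasible V. c \<le> gamma_x V E x) \<Longrightarrow> c \<le> gamma V E"
  unfolding gamma_def by (rule cInf_greatest) auto

lemma gamma_le:
  "x \<in> feasible V \<Longrightarrow> (\<forall>x\<in>feasible V. c \<le> gamma_x V E x) \<Longrightarrow> gamma V E \<le> gamma_x V E x"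
  unfolding gamma_def by (rule cInf_lower) (auto simp: bdd_below_def)

lemma gamma_pos:
  assumes "simple_graph V E" "connected_graph V E" "card V \<ge> 2"
  shows "gamma V E > 0"
proof -
  obtain c where c: "c > 0" "\<forall>x\<in>feasible V. c \<le> gamma_x V E x" using gamma_pos_bound[OF assms(1,2)] by blast
  have "finite V" using assms(1) unfolding simple_graph_def by auto
  then have "c \<le> gamma V E" using gamma_ge feasible_nonempty assms(3) c by metis
  then show ?thesis using c by linarith
qed

lemma key_bound:
  assumes sg: "simple_graph V E" and ex: "E a b" and gp: "0 < gamma V E"
    and bd: "\<forall>x\<in>feasible V. c \<le> gamma_x V E x"
    and s0: "(\<Sum>v\<in>V. y v) = 0" and ed: "\<forall>u v. E u v \<longrightarrow> \<bar>y u - y v\<bar> \<le> d" and u: "u \<in> V"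
  shows "\<bar>y u\<bar> \<le> d / gamma V E"
proof -
  have fin: "finite V" and inV: "\<And>u v. E u v \<Longrightarrow> u \<in> V \<and> v \<in> V"
    using sg unfolding simple_graph_def by auto
  have V: "V \<noteq> {}" using u by auto
  define s where "s = sup_norm V y"
  have yu: "\<bar>y u\<bar> \<le> s" unfolding s_def using sn_ge[OF fin u] .
  have d0: "0 \<le> d" using ed ex by force
  show ?thesis
  proof (cases "s = 0")
    case True
    then show ?thesis using yu d0 gp by simp
  next
    case False
    then have sp: "s > 0" using yu by linarith
    define z where "z = (\<lambda>v. y v / s)"
    have "(\<Sum>v\<in>V. z v) = 0" unfolding z_def using s0 by (simp add: sum_divide_distrib[symmetric])
    moreover have "sup_norm V z = 1"
    proof (rule antisym)
      show "sup_norm V z \<le> 1" using fin V sp sn_ge[OF fin, of _ y]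
        by (intro sn_le) (auto simp: z_def s_def abs_divide)
      obtain v0 where v0: "v0 \<in> V" "\<bar>y v0\<bar> = s" using sn_attain[OF fin V, of y] s_def by auto
      then have "\<bar>z v0\<bar> = 1" using sp by (simp add: z_def abs_divide)
      then show "1 \<le> sup_norm V z" using sn_ge[OF fin v0(1), of z] by simp
    qed
    ultimately have zf: "z \<in> feasible V" unfolding feasible_def by blast
    have ab: "a \<in> V" "b \<in> V" using inV ex by auto
    have "gamma_x V E z \<le> d / s"
    proof (rule gx_le[where E=E and u=a and v=b, OF fin ab ex])
      show "\<forall>u v. u \<in> V \<longrightarrow> v \<in> V \<longrightarrow> E u v \<longrightarrow> \<bar>z u - z v\<bar> \<le> d / s"
        using ed sp by (auto simp: z_def diff_divide_distrib[symmetric] abs_divide divide_right_mono)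
    qed
    then have "gamma V E \<le> d / s" using gamma_le[OF zf bd] by linarith
    then have "s * gamma V E \<le> d" using sp by (simp add: le_divide_eq mult.commute)
    then have "s \<le> d / gamma V E" using gp by (simp add: le_divide_eq)
    then show ?thesis using yu by linarith
  qed
qed


lemma lower_main:
  assumes sgG: "simple_graph VG EG" and sgH: "simple_graph VH EH"
    and exG: "EG a1 b1" and exH: "EH a2 b2"
    and gG: "0 < gamma VG EG" and gH: "0 < gamma VH EH"
    and bdG: "\<forall>x\<in>feasible VG. cG \<le> gamma_x VG EG x"
    and bdH: "\<forall>x\<in>feasible VH. cH \<le> gamma_x VH EH x"
    and x: "x \<in> feasible (VG \<times> VH)"
  shows "1 / (1 / gamma VG EG + 1 / gamma VH EH) \<le> gamma_x (VG \<times> VH) (cart_edge EG EH) x"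
proof -
  have finG: "finite VG" and inG: "\<And>u v. EG u v \<Longrightarrow> u \<in> VG \<and> v \<in> VG"
    using sgG unfolding simple_graph_def by auto
  have finH: "finite VH" and inH: "\<And>u v. EH u v \<Longrightarrow> u \<in> VH \<and> v \<in> VH"
    using sgH unfolding simple_graph_def by auto
  have finP: "finite (VG \<times> VH)" using finG finH by simp
  define d where "d = gamma_x (VG \<times> VH) (cart_edge EG EH) x"
  have e1: "\<bar>x (u,v) - x (u',v)\<bar> \<le> d" if "EG u u'" "v \<in> VH" for u u' v
    unfolding d_def using that inG[OF that(1)]
    by (intro gx_ge[where E="cart_edge EG EH" and u="(u,v)" and v="(u',v)", OF finP]) auto
  have e2: "\<bar>x (u,v) - x (u,v')\<bar> \<le> d" if "u \<in> VG" "EH v v'" for u v v'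
    unfolding d_def using that inH[OF that(2)]
    by (intro gx_ge[where E="cart_edge EG EH" and u="(u,v)" and v="(u,v')", OF finP]) auto
  have VH: "VH \<noteq> {}" using inH exH by auto
  have VG: "VG \<noteq> {}" using inG exG by auto
  define n where "n = real (card VH)"
  have np: "n > 0" unfolding n_def using finH VH by (simp add: card_gt_0_iff)
  define g where "g = (\<lambda>u. (\<Sum>v\<in>VH. x (u,v)) / n)"
  have ge: "\<forall>u u'. EG u u' \<longrightarrow> \<bar>g u - g u'\<bar> \<le> d"
  proof (intro allI impI)
    fix u u' assume a: "EG u u'"
    have "\<bar>g u - g u'\<bar> = \<bar>\<Sum>v\<in>VH. x (u,v) - x (u',v)\<bar> / n"
      unfolding g_def using np by (simp add: diff_divide_distrib[symmetric] abs_divide sum_subtractf)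
    also have "\<dots> \<le> (\<Sum>v\<in>VH. \<bar>x (u,v) - x (u',v)\<bar>) / n"
      using np by (intro divide_right_mono sum_abs) auto
    also have "\<dots> \<le> (\<Sum>v\<in>VH. d) / n"
      using np e1[OF a] by (intro divide_right_mono sum_mono) auto
    also have "\<dots> = d" using np by (simp add: n_def)
    finally show "\<bar>g u - g u'\<bar> \<le> d" .
  qed
  have xs: "(\<Sum>p\<in>VG \<times> VH. x p) = 0" using x unfolding feasible_def by auto
  have gs: "(\<Sum>u\<in>VG. g u) = 0"
    unfolding g_def sum_divide_distrib[symmetric] using xs
    by (simp add: sum.cartesian_product)
  have gb: "\<bar>g u\<bar> \<le> d / gamma VG EG" if "u \<in> VG" for u
    using key_bound[OF sgG exG gG bdG gs ge that] .
  obtain p0 where p0: "p0 \<in> VG \<times> VH" "\<bar>x p0\<bar> = 1"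
    using sn_attain[OF finP, of x] x VG VH unfolding feasible_def by auto
  obtain u0 v0 where uv0: "p0 = (u0, v0)" by (cases p0)
  have u0: "u0 \<in> VG" and v0: "v0 \<in> VH" using p0 uv0 by auto
  define h where "h = (\<lambda>v. x (u0,v) - g u0)"
  have hs: "(\<Sum>v\<in>VH. h v) = 0"
    unfolding h_def using np by (simp add: sum_subtractf g_def n_def)
  have he: "\<forall>v v'. EH v v' \<longrightarrow> \<bar>h v - h v'\<bar> \<le> d"
    unfolding h_def using e2[OF u0] by simp
  have hb: "\<bar>h v0\<bar> \<le> d / gamma VH EH"
    using key_bound[OF sgH exH gH bdH hs he v0] .
  have "1 = \<bar>g u0 + h v0\<bar>" using p0 uv0 by (simp add: h_def)
  also have "\<dots> \<le> \<bar>g u0\<bar> + \<bar>h v0\<bar>" by (rule abs_triangle_ineq)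
  also have "\<dots> \<le> d / gamma VG EG + d / gamma VH EH" using gb[OF u0] hb by linarith
  also have "\<dots> = d * (1 / gamma VG EG + 1 / gamma VH EH)" by (simp add: algebra_simps)
  finally have 1: "1 \<le> d * (1 / gamma VG EG + 1 / gamma VH EH)" .
  have "0 < 1 / gamma VG EG + 1 / gamma VH EH" using gG gH by (intro add_pos_pos) simp_all
  then show ?thesis using 1 unfolding d_def[symmetric] by (simp add: divide_le_eq mult.commute)
qed

lemma sum_fst: "(\<Sum>p\<in>A\<times>B. (f::'a\<Rightarrow>real) (fst p)) = real (card B) * sum f A"
proof -
  have "(\<Sum>p\<in>A\<times>B. f (fst p)) = (\<Sum>x\<in>A. \<Sum>y\<in>B. f x)" by (subst sum.cartesian_product) (simp add: split_beta)
  then show ?thesis by (simp add: sum_distrib_right mult.commute)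
qed
lemma sum_snd: "(\<Sum>p\<in>A\<times>B. (f::'b\<Rightarrow>real) (snd p)) = real (card A) * sum f B"
proof -
  have "(\<Sum>p\<in>A\<times>B. f (snd p)) = (\<Sum>x\<in>A. \<Sum>y\<in>B. f y)" by (subst sum.cartesian_product) (simp add: split_beta)
  then show ?thesis by simp
qed

lemma feasible_attain:
  assumes "finite V" "V \<noteq> {}" "a \<in> feasible V"
  shows "\<exists>u\<in>V. \<bar>a u\<bar> = 1"
  using sn_attain[OF assms(1,2), of a] assms(3) unfolding feasible_def by auto

lemma upper_main:
  assumes sgG: "simple_graph VG EG" and sgH: "simple_graph VH EH"
    and exG: "EG a1 b1" and exH: "EH a2 b2"
    and a: "a \<in> feasible VG" and b: "b \<in> feasible VH"
    and al: "0 < gamma_x VG EG a" and be: "0 < gamma_x VH EH b"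
    and bdP: "\<forall>y\<in>feasible (VG \<times> VH). c \<le> gamma_x (VG \<times> VH) (cart_edge EG EH) y"
  shows "gamma (VG \<times> VH) (cart_edge EG EH) \<le> 1 / (1 / gamma_x VG EG a + 1 / gamma_x VH EH b)"
proof -
  have finG: "finite VG" and inG: "\<And>u v. EG u v \<Longrightarrow> u \<in> VG \<and> v \<in> VG"
    using sgG unfolding simple_graph_def by auto
  have finH: "finite VH" and inH: "\<And>u v. EH u v \<Longrightarrow> u \<in> VH \<and> v \<in> VH"
    using sgH unfolding simple_graph_def by auto
  have finP: "finite (VG \<times> VH)" using finG finH by simp
  have VH: "VH \<noteq> {}" using inH exH by auto
  have VG: "VG \<noteq> {}" using inG exG by auto
  define \<alpha> where "\<alpha> = gamma_x VG EG a"
  define \<beta> where "\<beta> = gamma_x VH EH b"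
  define S where "S = 1 / \<alpha> + 1 / \<beta>"
  have Sp: "S > 0" unfolding S_def using al be \<alpha>_def \<beta>_def by (intro add_pos_pos) simp_all
  have nz: "\<alpha> \<noteq> 0" "\<beta> \<noteq> 0" "S \<noteq> 0" using al be Sp \<alpha>_def \<beta>_def by auto
  obtain u0 where u0: "u0 \<in> VG" "\<bar>a u0\<bar> = 1" using feasible_attain[OF finG VG a] by blast
  obtain v0 where v0: "v0 \<in> VH" "\<bar>b v0\<bar> = 1" using feasible_attain[OF finH VH b] by blast
  define sa where "sa = a u0"
  define sb where "sb = b v0"
  have sa: "\<bar>sa\<bar> = 1" "sa * a u0 = 1" using u0 unfolding sa_def by (auto simp: abs_if split: if_splits)
  have sb: "\<bar>sb\<bar> = 1" "sb * b v0 = 1" using v0 unfolding sb_def by (auto simp: abs_if split: if_splits)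
  define x where "x = (\<lambda>p. (sa * a (fst p) / \<alpha> + sb * b (snd p) / \<beta>) / S)"
  have as: "(\<Sum>u\<in>VG. a u) = 0" using a unfolding feasible_def by auto
  have bs: "(\<Sum>v\<in>VH. b v) = 0" using b unfolding feasible_def by auto
  have aB: "\<bar>a u\<bar> \<le> 1" if "u \<in> VG" for u using sn_ge[OF finG that, of a] a unfolding feasible_def by auto
  have bB: "\<bar>b v\<bar> \<le> 1" if "v \<in> VH" for v using sn_ge[OF finH that, of b] b unfolding feasible_def by auto
  have "(\<Sum>p\<in>VG \<times> VH. x p) = ((sa / \<alpha>) * (\<Sum>p\<in>VG \<times> VH. a (fst p)) + (sb / \<beta>) * (\<Sum>p\<in>VG \<times> VH. b (snd p))) / S"
    unfolding x_def by (simp add: sum_divide_distrib[symmetric] sum.distrib sum_distrib_left)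
  also have "\<dots> = 0" by (simp add: sum_fst sum_snd as bs)
  finally have xs: "(\<Sum>p\<in>VG \<times> VH. x p) = 0" .
  have xv0: "x (u0, v0) = 1"
    unfolding x_def using sa sb Sp by (simp add: S_def)
  have "sup_norm (VG \<times> VH) x = 1"
  proof (rule antisym)
    show "sup_norm (VG \<times> VH) x \<le> 1"
    proof (intro sn_le[OF finP] ballI)
      show "VG \<times> VH \<noteq> {}" using VG VH by simp
      fix p assume p: "p \<in> VG \<times> VH"
      have "\<bar>sa * a (fst p) / \<alpha> + sb * b (snd p) / \<beta>\<bar> \<le> \<bar>sa * a (fst p) / \<alpha>\<bar> + \<bar>sb * b (snd p) / \<beta>\<bar>"
        by (rule abs_triangle_ineq)
      also have "\<dots> = \<bar>a (fst p)\<bar> / \<alpha> + \<bar>b (snd p)\<bar> / \<beta>"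
        using sa sb al be by (simp add: abs_mult abs_divide \<alpha>_def \<beta>_def)
      also have "\<dots> \<le> 1 / \<alpha> + 1 / \<beta>"
        using aB[of "fst p"] bB[of "snd p"] p al be unfolding \<alpha>_def[symmetric] \<beta>_def[symmetric]
        by (intro add_mono divide_right_mono) auto
      finally show "\<bar>x p\<bar> \<le> 1" unfolding x_def S_def[symmetric] using Sp
        by (simp add: abs_divide)
    qed
    show "1 \<le> sup_norm (VG \<times> VH) x" using sn_ge[OF finP, of "(u0,v0)" x] u0 v0 xv0 by simp
  qed
  then have xf: "x \<in> feasible (VG \<times> VH)" using xs unfolding feasible_def by blast
  have abP: "(a1, a2) \<in> VG \<times> VH" "(b1, a2) \<in> VG \<times> VH" using inG[OF exG] inH[OF exH] by auto
  have "gamma_x (VG \<times> VH) (cart_edge EG EH) x \<le> 1 / S"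
  proof (rule gx_le[where E="cart_edge EG EH" and u="(a1,a2)" and v="(b1,a2)", OF finP abP])
    show "cart_edge EG EH (a1, a2) (b1, a2)" using exG by simp
    show "\<forall>p q. p \<in> VG \<times> VH \<longrightarrow> q \<in> VG \<times> VH \<longrightarrow> cart_edge EG EH p q \<longrightarrow> \<bar>x p - x q\<bar> \<le> 1 / S"
    proof (intro allI impI)
      fix p q assume p: "p \<in> VG \<times> VH" and q: "q \<in> VG \<times> VH" and e: "cart_edge EG EH p q"
      obtain u v u' v' where pq: "p = (u,v)" "q = (u',v')" by (cases p, cases q) auto
      from e pq have "(EG u u' \<and> v = v') \<or> (u = u' \<and> EH v v')" by simp
      then show "\<bar>x p - x q\<bar> \<le> 1 / S"
      proof
        assume h: "EG u u' \<and> v = v'"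
        have g: "\<bar>a u - a u'\<bar> \<le> \<alpha>" unfolding \<alpha>_def using h inG gx_ge[OF finG] by blast
        have "x p - x q = sa * (a u - a u') / \<alpha> / S" using h pq
          using nz unfolding x_def by (simp add: field_simps)
        then have "\<bar>x p - x q\<bar> = \<bar>a u - a u'\<bar> / \<alpha> / S"
          using sa al Sp by (simp add: abs_mult abs_divide \<alpha>_def)
        also have "\<dots> \<le> 1 / S" using g al Sp unfolding \<alpha>_def[symmetric]
          by (intro divide_right_mono) (auto simp: divide_le_eq)
        finally show ?thesis .
      next
        assume h: "u = u' \<and> EH v v'"
        have g: "\<bar>b v - b v'\<bar> \<le> \<beta>" unfolding \<beta>_def using h inH gx_ge[OF finH] by blast
        have "x p - x q = sb * (b v - b v') / \<beta> / S" using h pq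
          using nz unfolding x_def by (simp add: field_simps)
        then have "\<bar>x p - x q\<bar> = \<bar>b v - b v'\<bar> / \<beta> / S"
          using sb be Sp by (simp add: abs_mult abs_divide \<beta>_def)
        also have "\<dots> \<le> 1 / S" using g be Sp unfolding \<beta>_def[symmetric]
          by (intro divide_right_mono) (auto simp: divide_le_eq)
        finally show ?thesis .
      qed
    qed
  qed
  then show ?thesis using gamma_le[OF xf bdP] unfolding S_def \<alpha>_def \<beta>_def by linarith
qed


lemma inv_bound:
  fixes g k :: real and f :: "'c \<Rightarrow> real"
  assumes "0 < g" "0 < k" "\<forall>a\<in>A. 1 / f a \<le> k" "\<forall>a\<in>A. 0 < f a" "A \<noteq> {}" "g = Inf (f ` A)"
  shows "1 / g \<le> k"
proof -
  have "\<forall>a\<in>A. 1 / k \<le> f a"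
  proof
    fix a assume a: "a \<in> A"
    have "1 / f a \<le> k" "0 < f a" using assms(3,4) a by auto
    then have "1 \<le> k * f a" by (simp add: divide_le_eq mult.commute)
    then show "1 / k \<le> f a" using assms(2) by (simp add: divide_le_eq mult.commute)
  qed
  then have "1 / k \<le> g" unfolding assms(6) using assms(5) by (intro cInf_greatest) auto
  then show ?thesis using assms(1,2) by (simp add: divide_le_eq mult.commute)
qed

theorem theorem5p1:
  fixes VG :: "'a set" and EG :: "'a \<Rightarrow> 'a \<Rightarrow> bool"
    and VH :: "'b set" and EH :: "'b \<Rightarrow> 'b \<Rightarrow> bool"
  assumes "simple_graph VG EG" and "connected_graph VG EG" and "card VG \<ge> 2"
    and "simple_graph VH EH" and "connected_graph VH EH" and "card VH \<ge> 2"
  shows "gamma (VG \<times> VH) (cart_edge EG EH) = 1 / (1 / gamma VG EG + 1 / gamma VH EH)"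
proof -
  obtain a1 b1 where exG: "EG a1 b1" using edge_exists[OF assms(2,3)] by blast
  obtain a2 b2 where exH: "EH a2 b2" using edge_exists[OF assms(5,6)] by blast
  have gG: "0 < gamma VG EG" using gamma_pos[OF assms(1-3)] .
  have gH: "0 < gamma VH EH" using gamma_pos[OF assms(4-6)] .
  obtain cG where cG: "cG > 0" "\<forall>x\<in>feasible VG. cG \<le> gamma_x VG EG x"
    using gamma_pos_bound[OF assms(1,2)] by blast
  obtain cH where cH: "cH > 0" "\<forall>x\<in>feasible VH. cH \<le> gamma_x VH EH x"
    using gamma_pos_bound[OF assms(4,5)] by blast
  define T where "T = 1 / (1 / gamma VG EG + 1 / gamma VH EH)"
  have Tp: "T > 0" unfolding T_def using gG gH by (simp add: add_pos_pos)
  have bdP: "\<forall>y\<in>feasible (VG \<times> VH). T \<le> gamma_x (VG \<times> VH) (cart_edge EG EH) y"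
    unfolding T_def using lower_main[OF assms(1,4) exG exH gG gH cG(2) cH(2)] by blast
  have finG: "finite VG" using assms(1) unfolding simple_graph_def by auto
  have finH: "finite VH" using assms(4) unfolding simple_graph_def by auto
  have "card (VG \<times> VH) \<ge> 2"
  proof -
    have "2 * 1 \<le> card VG * card VH" using assms(3,6) by (intro mult_mono) auto
    then show ?thesis by (simp add: card_cartesian_product)
  qed
  then have feP: "feasible (VG \<times> VH) \<noteq> {}" using finG finH by (intro feasible_nonempty) auto
  define gP where "gP = gamma (VG \<times> VH) (cart_edge EG EH)"
  have lo: "T \<le> gP" unfolding gP_def using gamma_ge[OF feP bdP] .
  then have gPp: "gP > 0" using Tp by linarith
  have U: "1 / gamma_x VG EG a + 1 / gamma_x VH EH b \<le> 1 / gP"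
    if a: "a \<in> feasible VG" and b: "b \<in> feasible VH" for a b
  proof -
    have al: "0 < gamma_x VG EG a" using cG a by force
    have be: "0 < gamma_x VH EH b" using cH b by force
    have Sp: "0 < 1 / gamma_x VG EG a + 1 / gamma_x VH EH b" using al be by (simp add: add_pos_pos)
    have "gP \<le> 1 / (1 / gamma_x VG EG a + 1 / gamma_x VH EH b)"
      unfolding gP_def using upper_main[OF assms(1,4) exG exH a b al be bdP] .
    then show ?thesis using Sp gPp by (simp add: le_divide_eq mult.commute)
  qed
  have feG: "feasible VG \<noteq> {}" using feasible_nonempty[OF finG assms(3)] .
  have feH: "feasible VH \<noteq> {}" using feasible_nonempty[OF finH assms(6)] .
  have A: "1 / gamma VG EG \<le> 1 / gP - 1 / gamma_x VH EH b" if b: "b \<in> feasible VH" for b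
  proof (rule inv_bound[OF gG _ _ _ feG gamma_def])
    have al: "\<forall>a\<in>feasible VG. 0 < gamma_x VG EG a" using cG by force
    then show "\<forall>a\<in>feasible VG. 0 < gamma_x VG EG a" .
    show "\<forall>a\<in>feasible VG. 1 / gamma_x VG EG a \<le> 1 / gP - 1 / gamma_x VH EH b"
      using U b by force
    obtain a where "a \<in> feasible VG" using feG by blast
    then have "0 < 1 / gamma_x VG EG a" "1 / gamma_x VG EG a + 1 / gamma_x VH EH b \<le> 1 / gP"
      using U[OF _ b] al by auto
    then show "0 < 1 / gP - 1 / gamma_x VH EH b" by linarith
  qed
  have B: "1 / gamma VH EH \<le> 1 / gP - 1 / gamma VG EG"
  proof (rule inv_bound[OF gH _ _ _ feH gamma_def])
    have be: "\<forall>b\<in>feasible VH. 0 < gamma_x VH EH b" using cH by force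
    then show "\<forall>b\<in>feasible VH. 0 < gamma_x VH EH b" .
    show "\<forall>b\<in>feasible VH. 1 / gamma_x VH EH b \<le> 1 / gP - 1 / gamma VG EG"
      using A by force
    obtain b where "b \<in> feasible VH" using feH by blast
    then have "0 < 1 / gamma_x VH EH b" "1 / gamma VG EG \<le> 1 / gP - 1 / gamma_x VH EH b"
      using A be by auto
    then show "0 < 1 / gP - 1 / gamma VG EG" by linarith
  qed
  have "gP \<le> T"
  proof -
    have S: "0 < 1 / gamma VG EG + 1 / gamma VH EH" using gG gH by (simp add: add_pos_pos)
    have "1 / gamma VG EG + 1 / gamma VH EH \<le> 1 / gP" using B by linarith
    then show ?thesis unfolding T_def using S gPp by (simp add: le_divide_eq divide_le_eq mult.commute)
  qed
  then show ?thesis using lo unfolding gP_def T_def by linarith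
qed

end
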